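(* For every integer $N\ge 0$, let $T_{2\times 3}(5,N)$ be the number of tilings of a $5\times n$ rectangle, $n=6N/5$, by $N$ tiles of size $2\times 3$ (and $0$ if $6N/5\notin\mathbb{Z}$). Then, as formal power series, \[ \sum_{N\ge 0} T_{2\times 3}(5,N)\,z^N=\frac{1}{1-2z^5}. \]
   Context: A tiling of an $m\times n$ rectangle (width $m$, length $n$, made of $mn$ unit squares) by $a\times b$ tiles is a partition of the rectangle into non-overlapping axis-parallel $a\times b$ rectangles with integer corner coordinates, each placed in either of its two orientations. Tilings related by reflections or rotations of the rectangle are counted as distinct. The empty tiling counts once for $N=0$. *)

theory Defs
  imports "HOL-Computational_Algebra.Formal_Power_Series"
begin

definition rect :: "nat \<Rightarrow> nat \<Rightarrow> nat \<Rightarrow> nat \<Rightarrow> (nat \<times> nat) set" where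
  "rect x y w h = {x..<x+w} \<times> {y..<y+h}"

definition is_tile :: "nat \<Rightarrow> nat \<Rightarrow> (nat \<times> nat) set \<Rightarrow> bool" where
  "is_tile a b T \<longleftrightarrow> (\<exists>x y. T = rect x y a b \<or> T = rect x y b a)"

definition tilings :: "nat \<Rightarrow> nat \<Rightarrow> nat \<Rightarrow> nat \<Rightarrow> (nat \<times> nat) set set set" where
  "tilings a b m n = {P. (\<forall>T\<in>P. is_tile a b T) \<and>
       (\<forall>S\<in>P. \<forall>T\<in>P. S \<noteq> T \<longrightarrow> S \<inter> T = {}) \<and>
       \<Union>P = {0..<m} \<times> {0..<n}}"

definition tile_count :: "nat \<Rightarrow> nat \<Rightarrow> nat \<Rightarrow> nat \<Rightarrow> nat" where
  "tile_count a b m N =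
     (if m dvd a * b * N then card {P \<in> tilings a b m (a * b * N div m). card P = N} else 0)"

end

theory Submission
  imports Defs
begin


lemma rect_mem: "(a,b) \<in> rect x y w h \<longleftrightarrow> x \<le> a \<and> a < x+w \<and> y \<le> b \<and> b < y+h"
  by (auto simp: rect_def)

lemma rect_eq:
  assumes "rect x y w h = rect x' y' w' h'" "w>0" "h>0" "w'>0" "h'>0"
  shows "x=x' \<and> y=y' \<and> w=w' \<and> h=h'"
proof -
  have "(x,y) \<in> rect x y w h" "(x+w-1,y+h-1) \<in> rect x y w h"
    "(x',y') \<in> rect x' y' w' h'" "(x'+w'-1,y'+h'-1) \<in> rect x' y' w' h'"
    using assms(2-5) by (auto simp: rect_mem)
  hence "(x,y) \<in> rect x' y' w' h'" "(x',y') \<in> rect x y w h"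
    "(x+w-1,y+h-1) \<in> rect x' y' w' h'" "(x'+w'-1,y'+h'-1) \<in> rect x y w h"
    using assms(1) by auto
  thus ?thesis unfolding rect_mem by auto
qed

lemma rect_disj:
  assumes "rect x y w h \<inter> rect x' y' w' h' = {}" "w>0" "h>0" "w'>0" "h'>0"
  shows "x+w \<le> x' \<or> x'+w' \<le> x \<or> y+h \<le> y' \<or> y'+h' \<le> y"
proof (rule ccontr)
  assume "\<not> ?thesis"
  hence "(max x x', max y y') \<in> rect x y w h \<inter> rect x' y' w' h'"
    using assms(2-5) by (auto simp: rect_mem)
  with assms show False by blast
qed

lemma tile_at:
  assumes "P \<in> tilings 2 3 5 n" "a<5" "b<n"
  obtains x y w h where "(w=2\<and>h=3 \<or> w=3\<and>h=2)" "rect x y w h \<in> P" "x \<le> a" "a < x+w"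
     "y \<le> b" "b < y+h" "x+w \<le> 5" "y+h \<le> n"
proof -
  from assms have "(a,b) \<in> \<Union>P" by (auto simp: tilings_def)
  then obtain T where T: "T \<in> P" "(a,b) \<in> T" by blast
  from T assms have "is_tile 2 3 T" by (auto simp: tilings_def)
  then obtain x y w h where  wh: "(w=2\<and>h=3 \<or> w=3\<and>h=2)" and TT: "T = rect x y w h"
    unfolding is_tile_def by blast
  have sub: "T \<subseteq> {0..<5} \<times> {0..<n}" using T assms by (auto simp: tilings_def)
  have "(x+w-1, y+h-1) \<in> T" using TT wh by (auto simp: rect_mem)
  with sub have "x+w \<le> 5" "y+h \<le> n" using wh by auto
  with that wh T TT show ?thesis by (auto simp: rect_mem)
qed

lemma sep:
  assumes "P \<in> tilings 2 3 5 n" "rect x y w h \<in> P" "rect x' y' w' h' \<in> P"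
    "(w=2\<and>h=3 \<or> w=3\<and>h=2)" "(w'=2\<and>h'=3 \<or> w'=3\<and>h'=2)"
  shows "(x=x'\<and>y=y'\<and>w=w'\<and>h=h') \<or> x+w \<le> x' \<or> x'+w' \<le> x \<or> y+h \<le> y' \<or> y'+h' \<le> y"
proof (cases "rect x y w h = rect x' y' w' h'")
  case True
  then show ?thesis using rect_eq[OF True] assms(4,5) by auto
next
  case False
  then have "rect x y w h \<inter> rect x' y' w' h' = {}" using assms(1-3) by (auto simp: tilings_def)
  moreover have "w>0" "h>0" "w'>0" "h'>0" using assms(4,5) by auto
  ultimately show ?thesis using rect_disj by blast
qed

lemma sh23: "(2::nat)=2\<and>(3::nat)=3 \<or> (2::nat)=3\<and>(3::nat)=2" by simp
lemma sh32: "(3::nat)=2\<and>(2::nat)=3 \<or> (3::nat)=3\<and>(2::nat)=2" by simp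

definition A0 :: "(nat\<times>nat) set set" where
  "A0 = {rect 0 0 2 3, rect 2 0 3 2, rect 2 2 3 2, rect 0 3 2 3, rect 2 4 3 2}"
definition A1 :: "(nat\<times>nat) set set" where
  "A1 = {rect 0 0 3 2, rect 3 0 2 3, rect 0 2 3 2, rect 3 3 2 3, rect 0 4 3 2}"

lemma force:
  assumes P: "P \<in> tilings 2 3 5 n" and npos: "0<n"
  shows "6 \<le> n \<and> (A0 \<subseteq> P \<or> A1 \<subseteq> P)"
proof -
  note s = sep[OF P]
  obtain x0 y0 w0 h0 where t0: "(w0=2\<and>h0=3 \<or> w0=3\<and>h0=2)" "rect x0 y0 w0 h0 \<in> P" "x0 \<le> 0" "0 < x0+w0"
     "y0 \<le> 0" "0 < y0+h0" "x0+w0 \<le> 5" "y0+h0 \<le> n" by (rule tile_at[where a=0 and b=0, OF P _ npos]) simp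
  from t0(1) show ?thesis
  proof
    assume wh: "w0=2\<and>h0=3"
    have k0: "rect 0 0 2 3 \<in> P" using t0 wh by auto
    have nn: "3 \<le> n" using t0 wh by auto
    have nb: "0 < n" using nn by linarith
    obtain x1 y1 w1 h1 where t1: "(w1=2\<and>h1=3 \<or> w1=3\<and>h1=2)" "rect x1 y1 w1 h1 \<in> P" "x1 \<le> 2" "2 < x1+w1"
     "y1 \<le> 0" "0 < y1+h1" "x1+w1 \<le> 5" "y1+h1 \<le> n" by (rule tile_at[where a=2 and b=0, OF P _ nb]) simp
    obtain x2 y2 w2 h2 where t2: "(w2=2\<and>h2=3 \<or> w2=3\<and>h2=2)" "rect x2 y2 w2 h2 \<in> P" "x2 \<le> 4" "4 < x2+w2"
     "y2 \<le> 0" "0 < y2+h2" "x2+w2 \<le> 5" "y2+h2 \<le> n" by (rule tile_at[where a=4 and b=0, OF P _ nb]) simp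
    have g: True by simp
    have g: "x1=2" using s[OF k0 t1(2) sh23 t1(1)] t1 t2 g by (elim disjE; linarith)
    have g: "x1=2 \<and> y1=0 \<and> w1=3 \<and> h1=2" using s[OF t1(2) t2(2) t1(1) t2(1)] t1 t2 g by (elim disjE; linarith)
    hence k1: "rect 2 0 3 2 \<in> P" using t1 by auto
    have nb: "2 < n" using nn by linarith
    obtain x1 y1 w1 h1 where t1: "(w1=2\<and>h1=3 \<or> w1=3\<and>h1=2)" "rect x1 y1 w1 h1 \<in> P" "x1 \<le> 2" "2 < x1+w1"
     "y1 \<le> 2" "2 < y1+h1" "x1+w1 \<le> 5" "y1+h1 \<le> n" by (rule tile_at[where a=2 and b=2, OF P _ nb]) simp
    obtain x2 y2 w2 h2 where t2: "(w2=2\<and>h2=3 \<or> w2=3\<and>h2=2)" "rect x2 y2 w2 h2 \<in> P" "x2 \<le> 4" "4 < x2+w2"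
     "y2 \<le> 2" "2 < y2+h2" "x2+w2 \<le> 5" "y2+h2 \<le> n" by (rule tile_at[where a=4 and b=2, OF P _ nb]) simp
    have g: True by simp
    have g: "y1=2" using s[OF k1 t1(2) sh32 t1(1)] t1 t2 g by (elim disjE; linarith)
    have g: "y1=2\<and>x1=2" using s[OF k0 t1(2) sh23 t1(1)] t1 t2 g by (elim disjE; linarith)
    have g: "y1=2\<and>x1=2\<and>y2=2" using s[OF k1 t2(2) sh32 t2(1)] t1 t2 g by (elim disjE; linarith)
    have g: "x1=2 \<and> y1=2 \<and> w1=3 \<and> h1=2" using s[OF t1(2) t2(2) t1(1) t2(1)] t1 t2 g by (elim disjE; linarith)
    hence k2: "rect 2 2 3 2 \<in> P" using t1 by auto
    have nn: "4 \<le> n" using t1 g by linarith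
    have nb: "3 < n" using nn by linarith
    obtain x1 y1 w1 h1 where t1: "(w1=2\<and>h1=3 \<or> w1=3\<and>h1=2)" "rect x1 y1 w1 h1 \<in> P" "x1 \<le> 0" "0 < x1+w1"
     "y1 \<le> 3" "3 < y1+h1" "x1+w1 \<le> 5" "y1+h1 \<le> n" by (rule tile_at[where a=0 and b=3, OF P _ nb]) simp
    have g: True by simp
    have g: "y1=3" using s[OF k0 t1(2) sh23 t1(1)] t1  g by (elim disjE; linarith)
    have g: "x1=0 \<and> y1=3 \<and> w1=2 \<and> h1=3" using s[OF k2 t1(2) sh32 t1(1)] t1  g by (elim disjE; linarith)
    hence k3: "rect 0 3 2 3 \<in> P" using t1 by auto
    have n6: "6 \<le> n" using t1 g by linarith
    have nn: "5 \<le> n" using t1 g by linarith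
    have nb: "4 < n" using nn by linarith
    obtain x1 y1 w1 h1 where t1: "(w1=2\<and>h1=3 \<or> w1=3\<and>h1=2)" "rect x1 y1 w1 h1 \<in> P" "x1 \<le> 2" "2 < x1+w1"
     "y1 \<le> 4" "4 < y1+h1" "x1+w1 \<le> 5" "y1+h1 \<le> n" by (rule tile_at[where a=2 and b=4, OF P _ nb]) simp
    obtain x2 y2 w2 h2 where t2: "(w2=2\<and>h2=3 \<or> w2=3\<and>h2=2)" "rect x2 y2 w2 h2 \<in> P" "x2 \<le> 4" "4 < x2+w2"
     "y2 \<le> 4" "4 < y2+h2" "x2+w2 \<le> 5" "y2+h2 \<le> n" by (rule tile_at[where a=4 and b=4, OF P _ nb]) simp
    have g: True by simp
    have g: "y1=4" using s[OF k2 t1(2) sh32 t1(1)] t1 t2 g by (elim disjE; linarith)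
    have g: "y1=4\<and>x1=2" using s[OF k3 t1(2) sh23 t1(1)] t1 t2 g by (elim disjE; linarith)
    have g: "y1=4\<and>x1=2\<and>y2=4" using s[OF k2 t2(2) sh32 t2(1)] t1 t2 g by (elim disjE; linarith)
    have g: "x1=2 \<and> y1=4 \<and> w1=3 \<and> h1=2" using s[OF t1(2) t2(2) t1(1) t2(1)] t1 t2 g by (elim disjE; linarith)
    hence k4: "rect 2 4 3 2 \<in> P" using t1 by auto
    show ?thesis using n6 k0 k1 k2 k3 k4 unfolding A0_def by auto
  next
    assume wh: "w0=3\<and>h0=2"
    have k0: "rect 0 0 3 2 \<in> P" using t0 wh by auto
    have nn: "2 \<le> n" using t0 wh by auto
    have nb: "0 < n" using nn by linarith
    obtain x1 y1 w1 h1 where t1: "(w1=2\<and>h1=3 \<or> w1=3\<and>h1=2)" "rect x1 y1 w1 h1 \<in> P" "x1 \<le> 3" "3 < x1+w1"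
     "y1 \<le> 0" "0 < y1+h1" "x1+w1 \<le> 5" "y1+h1 \<le> n" by (rule tile_at[where a=3 and b=0, OF P _ nb]) simp
    have g: True by simp
    have g: "x1 = 3 \<and> y1=0 \<and> w1=2 \<and> h1=3" using s[OF k0 t1(2) sh32 t1(1)] t1  g by (elim disjE; linarith)
    hence k1: "rect 3 0 2 3 \<in> P" using t1 by auto
    have nn: "3 \<le> n" using t1 g by linarith
    have nb: "2 < n" using nn by linarith
    obtain x1 y1 w1 h1 where t1: "(w1=2\<and>h1=3 \<or> w1=3\<and>h1=2)" "rect x1 y1 w1 h1 \<in> P" "x1 \<le> 0" "0 < x1+w1"
     "y1 \<le> 2" "2 < y1+h1" "x1+w1 \<le> 5" "y1+h1 \<le> n" by (rule tile_at[where a=0 and b=2, OF P _ nb]) simp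
    obtain x2 y2 w2 h2 where t2: "(w2=2\<and>h2=3 \<or> w2=3\<and>h2=2)" "rect x2 y2 w2 h2 \<in> P" "x2 \<le> 2" "2 < x2+w2"
     "y2 \<le> 2" "2 < y2+h2" "x2+w2 \<le> 5" "y2+h2 \<le> n" by (rule tile_at[where a=2 and b=2, OF P _ nb]) simp
    have g: True by simp
    have g: "x1=0\<and>y1=2" using s[OF k0 t1(2) sh32 t1(1)] t1 t2 g by (elim disjE; linarith)
    have g: "x1=0\<and>y1=2\<and>y2=2" using s[OF k0 t2(2) sh32 t2(1)] t1 t2 g by (elim disjE; linarith)
    have g: "x1=0\<and>y1=2\<and>y2=2\<and>x2+w2\<le>3" using s[OF k1 t2(2) sh23 t2(1)] t1 t2 g by (elim disjE; linarith)
    have g: "x1=0 \<and> y1=2 \<and> w1=3 \<and> h1=2" using s[OF t1(2) t2(2) t1(1) t2(1)] t1 t2 g by (elim disjE; linarith)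
    hence k2: "rect 0 2 3 2 \<in> P" using t1 by auto
    have nn: "4 \<le> n" using t1 g by linarith
    have nb: "3 < n" using nn by linarith
    obtain x1 y1 w1 h1 where t1: "(w1=2\<and>h1=3 \<or> w1=3\<and>h1=2)" "rect x1 y1 w1 h1 \<in> P" "x1 \<le> 3" "3 < x1+w1"
     "y1 \<le> 3" "3 < y1+h1" "x1+w1 \<le> 5" "y1+h1 \<le> n" by (rule tile_at[where a=3 and b=3, OF P _ nb]) simp
    have g: True by simp
    have g: "y1=3" using s[OF k1 t1(2) sh23 t1(1)] t1  g by (elim disjE; linarith)
    have g: "x1 = 3 \<and> y1=3 \<and> w1=2 \<and> h1=3" using s[OF k2 t1(2) sh32 t1(1)] t1  g by (elim disjE; linarith)
    hence k3: "rect 3 3 2 3 \<in> P" using t1 by auto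
    have n6: "6 \<le> n" using t1 g by linarith
    have nn: "5 \<le> n" using t1 g by linarith
    have nb: "4 < n" using nn by linarith
    obtain x1 y1 w1 h1 where t1: "(w1=2\<and>h1=3 \<or> w1=3\<and>h1=2)" "rect x1 y1 w1 h1 \<in> P" "x1 \<le> 0" "0 < x1+w1"
     "y1 \<le> 4" "4 < y1+h1" "x1+w1 \<le> 5" "y1+h1 \<le> n" by (rule tile_at[where a=0 and b=4, OF P _ nb]) simp
    obtain x2 y2 w2 h2 where t2: "(w2=2\<and>h2=3 \<or> w2=3\<and>h2=2)" "rect x2 y2 w2 h2 \<in> P" "x2 \<le> 2" "2 < x2+w2"
     "y2 \<le> 4" "4 < y2+h2" "x2+w2 \<le> 5" "y2+h2 \<le> n" by (rule tile_at[where a=2 and b=4, OF P _ nb]) simp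
    have g: True by simp
    have g: "x1=0\<and>y1=4" using s[OF k2 t1(2) sh32 t1(1)] t1 t2 g by (elim disjE; linarith)
    have g: "x1=0\<and>y1=4\<and>y2=4" using s[OF k2 t2(2) sh32 t2(1)] t1 t2 g by (elim disjE; linarith)
    have g: "x1=0\<and>y1=4\<and>y2=4\<and>x2+w2\<le>3" using s[OF k3 t2(2) sh23 t2(1)] t1 t2 g by (elim disjE; linarith)
    have g: "x1=0 \<and> y1=4 \<and> w1=3 \<and> h1=2" using s[OF t1(2) t2(2) t1(1) t2(1)] t1 t2 g by (elim disjE; linarith)
    hence k4: "rect 0 4 3 2 \<in> P" using t1 by auto
    show ?thesis using n6 k0 k1 k2 k3 k4 unfolding A1_def by auto
  qed
qed



definition sf :: "nat\<times>nat \<Rightarrow> nat\<times>nat" where "sf c = (fst c, snd c + 6)"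
definition usf :: "nat\<times>nat \<Rightarrow> nat\<times>nat" where "usf c = (fst c, snd c - 6)"
definition shP :: "(nat\<times>nat) set set \<Rightarrow> (nat\<times>nat) set set" where "shP Q = (\<lambda>T. sf ` T) ` Q"

definition blk :: "(nat\<times>nat) set set \<Rightarrow> bool" where
  "blk A \<longleftrightarrow> (\<forall>T\<in>A. is_tile 2 3 T) \<and> (\<forall>S\<in>A. \<forall>T\<in>A. S \<noteq> T \<longrightarrow> S \<inter> T = {}) \<and>
     \<Union>A = {0..<5} \<times> {0..<6} \<and> (\<forall>T\<in>A. T \<noteq> {})"

lemma rect_ne: "w>0 \<Longrightarrow> h>0 \<Longrightarrow> rect x y w h \<noteq> {}"
  by (auto simp: rect_def)

lemma rect_sep_empty: "x+w \<le> x' \<or> x'+w' \<le> x \<or> y+h \<le> y' \<or> y'+h' \<le> y \<Longrightarrow> rect x y w h \<inter> rect x' y' w' h' = {}"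
  by (auto simp: rect_def)

lemma blk_A0: "blk A0"
  unfolding blk_def
  apply (intro conjI)
     apply (unfold A0_def is_tile_def; blast)
    apply (simp add: A0_def rect_sep_empty)
   apply (auto simp: A0_def rect_def)[1]
  apply (simp add: A0_def rect_ne)
  done

lemma blk_A1: "blk A1"
  unfolding blk_def
  apply (intro conjI)
     apply (unfold A1_def is_tile_def; blast)
    apply (simp add: A1_def rect_sep_empty)
   apply (auto simp: A1_def rect_def)[1]
  apply (simp add: A1_def rect_ne)
  done

lemma inj_sf: "inj sf" by (auto simp: inj_def sf_def prod_eq_iff)

lemma sf_rect: "sf ` rect x y w h = rect x (y+6) w h"
proof -
  have "sf ` rect x y w h = {x..<x+w} \<times> ((\<lambda>b. b+6) ` {y..<y+h})"
    by (auto simp: rect_def sf_def image_iff Bex_def) presburger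
  also have "(\<lambda>b. b+6) ` {y..<y+h} = {y+6..<y+6+h}"
    by (simp add: ac_simps)
  finally show ?thesis by (simp add: rect_def)
qed

lemma is_tile_sf: "is_tile a b T \<Longrightarrow> is_tile a b (sf ` T)"
  unfolding is_tile_def by (auto simp: sf_rect; blast)

lemma sf_reg: "sf ` ({0..<5}\<times>{0..<m}) = {0..<5}\<times>{6..<m+6}"
  using sf_rect[of 0 0 5 m] by (simp add: rect_def ac_simps)

lemma tilingsD:
  assumes "Q \<in> tilings a b k m"
  shows "\<forall>T\<in>Q. is_tile a b T" "\<forall>S\<in>Q. \<forall>T\<in>Q. S\<noteq>T \<longrightarrow> S\<inter>T={}" "\<Union>Q = {0..<k}\<times>{0..<m}"
  using assms by (auto simp: tilings_def)

lemma add_tiling: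
  assumes A: "blk A" and Q: "Q \<in> tilings 2 3 5 m"
  shows "A \<union> shP Q \<in> tilings 2 3 5 (m+6)"
proof -
  note Qt = tilingsD[OF Q]
  note At = A[unfolded blk_def]
  have U: "\<Union>(shP Q) = {0..<5}\<times>{6..<m+6}"
  proof -
    have "\<Union>(shP Q) = sf ` \<Union>Q" by (auto simp: shP_def)
    then show ?thesis using Qt(3) sf_reg[of m] by simp
  qed
  have tiles: "\<forall>T\<in>A \<union> shP Q. is_tile 2 3 T"
    using At Qt(1) is_tile_sf by (auto simp: shP_def)
  have disj: "\<forall>S\<in>A \<union> shP Q. \<forall>T\<in>A \<union> shP Q. S\<noteq>T \<longrightarrow> S\<inter>T={}"
  proof (intro ballI impI)
    fix S T assume S: "S \<in> A \<union> shP Q" and T: "T \<in> A \<union> shP Q" and ST: "S \<noteq> T"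
    have AA: "X \<inter> Y = {}" if "X \<in> A" "Y \<in> shP Q" for X Y
    proof -
      have "X \<subseteq> {0..<5}\<times>{0..<6}" using that(1) At by blast
      moreover have "Y \<subseteq> {0..<5}\<times>{6..<m+6}" using that(2) U by blast
      ultimately show ?thesis
      proof (intro equals0I)
        fix c assume "X \<subseteq> {0..<5}\<times>{0..<6}" "Y \<subseteq> {0..<5}\<times>{6..<m+6}" "c \<in> X \<inter> Y"
        then have "c \<in> {0..<5}\<times>{0..<6}" "c \<in> {0..<5}\<times>{6..<m+6}" by blast+
        then show False by (cases c) auto
      qed
    qed
    have BB: "X \<inter> Y = {}" if XY: "X \<in> shP Q" "Y \<in> shP Q" "X \<noteq> Y" for X Y
    proof -
      obtain X' Y' where X': "X' \<in> Q" "X = sf ` X'" and Y': "Y' \<in> Q" "Y = sf ` Y'"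
        using XY(1,2) unfolding shP_def by blast
      then have "X' \<noteq> Y'" using XY(3) by auto
      then have "X' \<inter> Y' = {}" using Qt(2) X' Y' by blast
      then show ?thesis using X' Y' image_Int[OF inj_sf, of X' Y'] by simp
    qed
    have A2: "X \<inter> Y = {}" if "X \<in> A" "Y \<in> A" "X \<noteq> Y" for X Y
      using At that by blast
    show "S \<inter> T = {}"
    proof (cases "S \<in> A")
      case True
      then show ?thesis
      proof (cases "T \<in> A")
        case True2: True
        show ?thesis using A2[OF True True2 ST] .
      next
        case False
        then have "T \<in> shP Q" using T by blast
        then show ?thesis using AA[OF True] by blast
      qed
    next
      case False
      then have S2: "S \<in> shP Q" using S by blast
      show ?thesis
      proof (cases "T \<in> A")
        case True
        then show ?thesis using AA[OF True S2] by blast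
      next
        case False
        then have "T \<in> shP Q" using T by blast
        then show ?thesis using BB[OF S2 _ ST] by blast
      qed
    qed
  qed
  have un: "\<Union>(A \<union> shP Q) = {0..<5}\<times>{0..<m+6}"
    using U At by auto
  show ?thesis using tiles disj un by (simp add: tilings_def)
qed

lemma usf_sf: "usf (sf c) = c" by (simp add: usf_def sf_def)
lemma usf_sf_img: "usf ` sf ` X = X" by (simp add: image_image usf_sf)

lemma split_tiling:
  assumes A: "blk A" and P: "P \<in> tilings 2 3 5 (m+6)" and AP: "A \<subseteq> P"
  shows "\<exists>Q\<in>tilings 2 3 5 m. P = A \<union> shP Q"
proof -
  note Pt = tilingsD[OF P]
  note At = A[unfolded blk_def]
  have loc: "T \<subseteq> {0..<5}\<times>{6..<m+6}" if T: "T \<in> P - A" for T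
  proof
    fix c assume c: "c \<in> T"
    have "c \<in> {0..<5}\<times>{0..<m+6}" using c T Pt(3) by blast
    moreover have "c \<notin> \<Union>A"
    proof
      assume "c \<in> \<Union>A"
      then obtain S where "S \<in> A" "c \<in> S" by blast
      moreover have "S \<noteq> T" using T \<open>S \<in> A\<close> by blast
      ultimately have "S \<inter> T = {}" using Pt(2) AP T by blast
      with c \<open>c \<in> S\<close> show False by blast
    qed
    ultimately show "c \<in> {0..<5}\<times>{6..<m+6}" using At by (cases c) auto
  qed
  have bk: "sf ` (usf ` T) = T" if T: "T \<in> P - A" for T
  proof -
    have "sf (usf c) = c" if "c \<in> T" for c
      using loc[OF T] that by (cases c) (auto simp: sf_def usf_def)
    then show ?thesis by (simp add: image_image)
  qed
  define Q where "Q = (\<lambda>T. usf ` T) ` (P - A)"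
  have shQ: "shP Q = P - A"
  proof -
    have "shP Q = (\<lambda>T. sf ` usf ` T) ` (P - A)" unfolding shP_def Q_def image_image ..
    also have "\<dots> = (\<lambda>T. T) ` (P - A)" by (rule image_cong[OF refl]) (rule bk)
    finally show ?thesis by simp
  qed
  have PA: "P = A \<union> shP Q" using AP shQ by auto
  have UPA: "\<Union>(P - A) = {0..<5}\<times>{6..<m+6}"
  proof
    show "\<Union>(P - A) \<subseteq> {0..<5}\<times>{6..<m+6}" using loc by blast
  next
    show "{0..<5}\<times>{6..<m+6} \<subseteq> \<Union>(P - A)"
    proof
      fix c :: "nat\<times>nat" assume c: "c \<in> {0..<5}\<times>{6..<m+6}"
      then have "c \<in> \<Union>P" using Pt(3) by auto
      then obtain T where T: "T \<in> P" "c \<in> T" by blast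
      have "T \<notin> A"
      proof
        assume "T \<in> A"
        then have "c \<in> {0..<5}\<times>{0..<6}" using At T(2) by blast
        with c show False by auto
      qed
      with T show "c \<in> \<Union>(P - A)" by blast
    qed
  qed
  have tiles: "\<forall>T\<in>Q. is_tile 2 3 T"
  proof
    fix T assume "T \<in> Q"
    then obtain T' where T': "T' \<in> P - A" "T = usf ` T'" unfolding Q_def by blast
    have "is_tile 2 3 T'" using Pt(1) T' by blast
    then obtain x y w h where wh: "(w=2\<and>h=3 \<or> w=3\<and>h=2)" and TT: "T' = rect x y w h"
      unfolding is_tile_def by blast
    have "(x,y) \<in> T'" using TT wh by (auto simp: rect_def)
    then have "6 \<le> y" using loc[OF T'(1)] by auto
    then have "sf ` rect x (y-6) w h = T'" using TT sf_rect[of x "y-6" w h] by simp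
    then have "T = rect x (y-6) w h" using T'(2) usf_sf_img by metis
    then show "is_tile 2 3 T" using wh unfolding is_tile_def by blast
  qed
  have un: "\<Union>Q = {0..<5}\<times>{0..<m}"
  proof -
    have "\<Union>Q = usf ` \<Union>(P - A)" unfolding Q_def by auto
    also have "\<dots> = usf ` sf ` ({0..<5}\<times>{0..<m})" using UPA sf_reg by simp
    finally show ?thesis using usf_sf_img by simp
  qed
  have disj: "\<forall>S\<in>Q. \<forall>T\<in>Q. S\<noteq>T \<longrightarrow> S\<inter>T={}"
  proof (intro ballI impI)
    fix S T assume S: "S \<in> Q" and T: "T \<in> Q" and ST: "S \<noteq> T"
    obtain S' where S': "S' \<in> P - A" "S = usf ` S'" using S unfolding Q_def by blast
    obtain T' where T': "T' \<in> P - A" "T = usf ` T'" using T unfolding Q_def by blast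
    have "S' \<noteq> T'" using ST S' T' by auto
    then have "S' \<inter> T' = {}" using Pt(2) S' T' by blast
    moreover have "sf ` S = S'" "sf ` T = T'" using bk S' T' by auto
    ultimately show "S \<inter> T = {}" by blast
  qed
  have "Q \<in> tilings 2 3 5 m" using tiles un disj by (simp add: tilings_def)
  with PA show ?thesis by blast
qed


unbundle fps_syntax

definition G :: "rat fps" where "G = Abs_fps (\<lambda>n. if 5 dvd n then 2^(n div 5) else 0)"

lemma G_inv: "inverse (1 - 2 * fps_X ^ 5) = G"
proof (rule fps_inverse_unique)
  show "(1 - 2 * fps_X ^ 5) * G = 1"
  proof (rule fps_ext)
    fix n
    have e: "(1 - 2 * fps_X ^ 5) * G = G - 2 * (fps_X ^ 5 * G)" by (simp add: algebra_simps)
    have "((1 - 2 * fps_X ^ 5) * G) $ n = G $ n - 2 * (if n < 5 then 0 else G $ (n - 5))"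
      by (simp only: e fps_sub_nth) (simp add: numeral_fps_const fps_X_power_mult_nth)
    also have "\<dots> = (1::rat fps) $ n"
    proof (cases "n < 5")
      case True
      then show ?thesis by (auto simp: G_def)
    next
      case False
      then obtain k where k: "n = k + 5" by (metis add.commute le_add_diff_inverse not_less)
      have d: "5 dvd (k+5) \<longleftrightarrow> 5 dvd k" by presburger
      have q: "(k+5) div 5 = Suc (k div 5)" by simp
      show ?thesis using k d q by (simp add: G_def)
    qed
    finally show "((1 - 2 * fps_X ^ 5) * G) $ n = (1::rat fps) $ n" .
  qed
qed



lemma fin_tilings: "finite (tilings a b k m)"
proof (rule finite_subset)
  show "tilings a b k m \<subseteq> Pow (Pow ({0..<k}\<times>{0..<m}))"
    by (auto simp: tilings_def)
qed simp

lemma tile_ne: "is_tile 2 3 T \<Longrightarrow> T \<noteq> {}"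
proof -
  assume "is_tile 2 3 T"
  then obtain x y where "T = rect x y 2 3 \<or> T = rect x y 3 2" unfolding is_tile_def by blast
  then have "(x,y) \<in> T" by (auto simp: rect_def)
  then show ?thesis by blast
qed

lemma til0: "tilings 2 3 5 0 = {{}}"
proof
  show "tilings 2 3 5 0 \<subseteq> {{}}"
  proof
    fix P assume P: "P \<in> tilings 2 3 5 0"
    note Pt = tilingsD[OF P]
    have "P = {}"
    proof (rule ccontr)
      assume "P \<noteq> {}"
      then obtain T where "T \<in> P" by blast
      then have "T \<noteq> {}" "T \<subseteq> \<Union>P" using Pt(1) tile_ne by auto
      then show False using Pt(3) by auto
    qed
    then show "P \<in> {{}}" by simp
  qed
  show "{{}} \<subseteq> tilings 2 3 5 0" by (auto simp: tilings_def)
qed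

lemma sh_not_A:
  assumes A: "blk A" and T: "T \<in> A"
  shows "T \<notin> shP Q"
proof
  assume "T \<in> shP Q"
  then obtain X where X: "T = sf ` X" unfolding shP_def by blast
  have "T \<noteq> {}" using A T by (simp add: blk_def)
  have "T \<subseteq> \<Union>A" using T by blast
  moreover have "\<Union>A = {0..<5}\<times>{0..<6}" using A by (simp add: blk_def)
  ultimately have "T \<subseteq> {0..<5}\<times>{0..<6}" by simp
  obtain c where c: "c \<in> T" using \<open>T \<noteq> {}\<close> by blast
  then have "snd c < 6" using \<open>T \<subseteq> {0..<5}\<times>{0..<6}\<close> by auto
  with c X show False by (auto simp: sf_def)
qed

lemma unshP: "(\<lambda>T. usf ` T) ` shP Q = Q"
  by (simp add: shP_def image_image usf_sf)

lemma inj_shP: "inj shP"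
proof (rule injI)
  fix Q1 Q2 assume "shP Q1 = shP Q2"
  then have "(\<lambda>T. usf ` T) ` shP Q1 = (\<lambda>T. usf ` T) ` shP Q2" by simp
  then show "Q1 = Q2" unfolding unshP .
qed

lemma inj_add:
  assumes A: "blk A"
  shows "inj_on (\<lambda>Q. A \<union> shP Q) X"
proof
  fix Q1 Q2 assume eq: "A \<union> shP Q1 = A \<union> shP Q2"
  have h: "shP Q = (A \<union> shP Q) - A" for Q using sh_not_A[OF A, of _ Q] by blast
  have "shP Q1 = shP Q2" using h[of Q1] h[of Q2] eq by simp
  then show "Q1 = Q2" using inj_shP by (simp add: inj_eq)
qed

lemma not_both:
  assumes P: "P \<in> tilings 2 3 5 n" and "A0 \<subseteq> P" "A1 \<subseteq> P"
  shows False
proof -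
  have "rect 0 0 2 3 \<in> A0" "rect 0 0 3 2 \<in> A1" by (simp_all add: A0_def A1_def)
  then have "rect 0 0 2 3 \<in> P" "rect 0 0 3 2 \<in> P" using assms(2,3) by blast+
  moreover have "rect 0 0 2 3 \<noteq> rect 0 0 3 2" using rect_eq[of 0 0 2 3 0 0 3 2] by auto
  moreover have "(0,0) \<in> rect 0 0 2 3 \<inter> rect 0 0 3 2" by (simp add: rect_def)
  ultimately show False using tilingsD(2)[OF P] by blast
qed

lemma til_step: "tilings 2 3 5 (m+6) =
   (\<lambda>Q. A0 \<union> shP Q) ` tilings 2 3 5 m \<union> (\<lambda>Q. A1 \<union> shP Q) ` tilings 2 3 5 m"
proof
  show "tilings 2 3 5 (m+6) \<subseteq> (\<lambda>Q. A0 \<union> shP Q) ` tilings 2 3 5 m \<union> (\<lambda>Q. A1 \<union> shP Q) ` tilings 2 3 5 m"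
  proof
    fix P assume P: "P \<in> tilings 2 3 5 (m+6)"
    from force[OF P] have "A0 \<subseteq> P \<or> A1 \<subseteq> P" by simp
    then show "P \<in> (\<lambda>Q. A0 \<union> shP Q) ` tilings 2 3 5 m \<union> (\<lambda>Q. A1 \<union> shP Q) ` tilings 2 3 5 m"
      using split_tiling[OF blk_A0 P] split_tiling[OF blk_A1 P] by blast
  qed
  show "(\<lambda>Q. A0 \<union> shP Q) ` tilings 2 3 5 m \<union> (\<lambda>Q. A1 \<union> shP Q) ` tilings 2 3 5 m \<subseteq> tilings 2 3 5 (m+6)"
    using add_tiling[OF blk_A0] add_tiling[OF blk_A1] by blast
qed

lemma card_step: "card (tilings 2 3 5 (m+6)) = 2 * card (tilings 2 3 5 m)"
proof -
  let ?S0 = "(\<lambda>Q. A0 \<union> shP Q) ` tilings 2 3 5 m" and ?S1 = "(\<lambda>Q. A1 \<union> shP Q) ` tilings 2 3 5 m"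
  have d: "?S0 \<inter> ?S1 = {}"
  proof (rule equals0I)
    fix P assume "P \<in> ?S0 \<inter> ?S1"
    then have "P \<in> tilings 2 3 5 (m+6)" "A0 \<subseteq> P" "A1 \<subseteq> P" using til_step by blast+
    then show False using not_both by blast
  qed
  have "card (tilings 2 3 5 (m+6)) = card ?S0 + card ?S1"
    unfolding til_step by (rule card_Un_disjoint) (use d fin_tilings in auto)
  also have "card ?S0 = card (tilings 2 3 5 m)" by (rule card_image[OF inj_add[OF blk_A0]])
  also have "card ?S1 = card (tilings 2 3 5 m)" by (rule card_image[OF inj_add[OF blk_A1]])
  finally show ?thesis by simp
qed

lemma card_6k: "card (tilings 2 3 5 (6*k)) = 2^k"
proof (induction k)
  case 0 then show ?case by (simp add: til0)
next
  case (Suc k)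
  have "card (tilings 2 3 5 (6 * Suc k)) = card (tilings 2 3 5 (6*k + 6))" by (simp add: add.commute)
  then show ?case using card_step[of "6*k"] Suc by simp
qed

lemma card_rect: "card (rect x y w h) = w*h"
  by (simp add: rect_def card_cartesian_product)

lemma card_tiling:
  assumes P: "P \<in> tilings 2 3 5 n"
  shows "6 * card P = 5 * n"
proof -
  note Pt = tilingsD[OF P]
  have c6: "card T = 6" if "T \<in> P" for T
    using Pt(1) that card_rect unfolding is_tile_def by fastforce
  have fT: "finite T" if "T \<in> P" for T
  proof (rule finite_subset)
    show "T \<subseteq> {0..<5}\<times>{0..<n}" using Pt(3) that by blast
  qed simp
  have "card (\<Union>P) = sum card P"
    by (rule card_Union_disjoint) (use Pt(2) fT in \<open>auto simp: pairwise_def disjnt_def\<close>)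
  also have "\<dots> = sum (\<lambda>_. 6) P" using c6 by simp
  also have "\<dots> = 6 * card P" by simp
  finally show ?thesis using Pt(3) by simp
qed

lemma tile_count_eq: "tile_count 2 3 5 N = (if 5 dvd N then 2^(N div 5) else 0)"
proof (cases "5 dvd N")
  case True
  then obtain k where k: "N = 5*k" by blast
  have dv: "5 dvd 2*3*N" using k by simp
  have n: "2*3*N div 5 = 6*k" using k by simp
  have "{P \<in> tilings 2 3 5 (6*k). card P = N} = tilings 2 3 5 (6*k)"
    using card_tiling[of _ "6*k"] k by auto
  then show ?thesis using True k dv n card_6k unfolding tile_count_def by simp
next
  case False
  then have "\<not> 5 dvd 2*3*N" by presburger
  then show ?thesis using False unfolding tile_count_def by simp
qed

theorem mainTheorem8:
  shows "Abs_fps (\<lambda>N. of_nat (tile_count 2 3 5 N) :: rat) = inverse (1 - 2 * fps_X ^ 5)"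
  unfolding G_inv G_def tile_count_eq by (rule fps_ext) simp


end
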